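(* Let $I=(a_1,\dots,a_n)\in(0,1]^n$ be a sorted item sequence, and let $f$ be the assignment produced by $MM_2$ on $I$ (items indexed by their position in $I$). Suppose $f$ has at least one bin containing a sole class-1 item, and let $p$ be the maximum index of such sole class-1 items in $f$. Let $U$ be the set of indices of items (other than $1,\dots,p$) that share a bin with one of the items $1,2,\dots,p$ in $f$ (possibly $U=\emptyset$). Then for any assignment $g$ of $I$ without cardinality constraints, letting $W$ be the set of indices of items (other than $1,\dots,p$) that share a bin with one of the items $1,2,\dots,p$ in $g$, we have $W\subseteq U$.
   Context: An item sequence $I=(a_1,\dots,a_n)\in(0,1]^n$ is sorted if $a_1\ge\cdots\ge a_n$. An assignment without cardinality constraints is a map $g:\{1,\dots,n\}\to\mathbb{N}$ with $\sum_{i:g(i)=j}a_i\le1$ for each bin $j$. A class-1 item is an item of size in $(\frac12,1]$; an item is sole if its bin contains no other item. Algorithm $MM_k$ ($k$-cardinality constrained version of $MM$): sort the items in non-increasing order (on an already sorted input this leaves the order, hence the indices, unchanged); keep a single open bin with load $S$. Repeat while items remain: if the open bin already contains $k$ items, close it and open a new bin; else if the head (largest remaining) item fits ($S+\text{head}\le1$) pack it; else if the tail (smallest remaining) item fits pack it; else close the open bin permanently and open a new empty bin. $MM_2$ is the case $k=2$. *)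

theory Defs
  imports Complex_Main
begin

definition valid_items :: "(nat \<Rightarrow> real) \<Rightarrow> nat \<Rightarrow> bool" where
  "valid_items a n \<longleftrightarrow> (\<forall>i\<in>{1..n}. 0 < a i \<and> a i \<le> 1)"

definition sorted_items :: "(nat \<Rightarrow> real) \<Rightarrow> nat \<Rightarrow> bool" where
  "sorted_items a n \<longleftrightarrow> (\<forall>i j. 1 \<le> i \<and> i \<le> j \<and> j \<le> n \<longrightarrow> a j \<le> a i)"

definition is_assignment :: "(nat \<Rightarrow> real) \<Rightarrow> nat \<Rightarrow> (nat \<Rightarrow> nat) \<Rightarrow> bool" where
  "is_assignment a n g \<longleftrightarrow> (\<forall>j. (\<Sum>i\<in>{i\<in>{1..n}. g i = j}. a i) \<le> 1)"

definition class1 :: "(nat \<Rightarrow> real) \<Rightarrow> nat \<Rightarrow> bool" where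
  "class1 a i \<longleftrightarrow> 1/2 < a i"

definition sole :: "nat \<Rightarrow> (nat \<Rightarrow> nat) \<Rightarrow> nat \<Rightarrow> bool" where
  "sole n f i \<longleftrightarrow> (\<forall>i'\<in>{1..n}. i' \<noteq> i \<longrightarrow> f i' \<noteq> f i)"

text \<open>Remaining items are the indices
  lo..hi (head = lo = largest, tail = hi = smallest); b is the open bin, c the number of
  items in it, S its load, f the assignment built so far.  The fuel argument only serves
  to make the definition total; 2n+2 steps suffice (each item causes at most one
  closing step followed by its packing step).\<close>
fun mm_loop :: "nat \<Rightarrow> nat \<Rightarrow> (nat \<Rightarrow> real) \<Rightarrow> nat \<Rightarrow> nat \<Rightarrow> nat \<Rightarrow> nat \<Rightarrow> real
    \<Rightarrow> (nat \<Rightarrow> nat) \<Rightarrow> (nat \<Rightarrow> nat)" where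
  "mm_loop 0 k a lo hi b c S f = f"
| "mm_loop (Suc fuel) k a lo hi b c S f =
     (if hi < lo then f
      else if c = k then mm_loop fuel k a lo hi (Suc b) 0 0 f
      else if S + a lo \<le> 1 then mm_loop fuel k a (Suc lo) hi b (Suc c) (S + a lo) (f(lo := b))
      else if S + a hi \<le> 1 then mm_loop fuel k a lo (hi - 1) b (Suc c) (S + a hi) (f(hi := b))
      else mm_loop fuel k a lo hi (Suc b) 0 0 f)"

definition MM :: "nat \<Rightarrow> (nat \<Rightarrow> real) \<Rightarrow> nat \<Rightarrow> (nat \<Rightarrow> nat)" where
  "MM k a n = mm_loop (2 * n + 2) k a 1 n 0 0 0 (\<lambda>_. 0)"

definition partners :: "nat \<Rightarrow> (nat \<Rightarrow> nat) \<Rightarrow> nat \<Rightarrow> nat set" where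
  "partners n f p = {j\<in>{1..n}. j \<notin> {1..p} \<and> (\<exists>i\<in>{1..p}. f j = f i)}"

end

theory Submission
  imports Defs
begin

lemma frame:
  "j < lo \<or> hi < j \<Longrightarrow> mm_loop fuel k a lo hi b c S f j = f j"
proof (induction fuel arbitrary: lo hi b c S f)
  case 0
  then show ?case by simp
next
  case (Suc fuel)
  show ?case
  proof (cases "hi < lo")
    case True then show ?thesis by simp
  next
    case False
    then show ?thesis using Suc.prems
      by (auto simp: Suc.IH)
  qed
qed

definition Inv :: "(nat \<Rightarrow> real) \<Rightarrow> nat \<Rightarrow> nat \<Rightarrow> nat \<Rightarrow> nat \<Rightarrow> nat \<Rightarrow> real \<Rightarrow> (nat \<Rightarrow> nat) \<Rightarrow> bool" where
  "Inv a n lo hi b c S f \<longleftrightarrow> 1 \<le> lo \<and> lo \<le> Suc hi \<and> hi \<le> n \<and> c \<le> 2 \<and> (c = 0 \<longrightarrow> S = 0)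
     \<and> (c \<ge> 1 \<longrightarrow> 2 \<le> lo \<and> f (lo - 1) = b)
     \<and> (\<forall>j. hi < j \<and> j \<le> n \<longrightarrow> (\<exists>i. 1 \<le> i \<and> i < lo \<and> f j = f i))"

lemma main:
  assumes va: "valid_items a n" and so: "sorted_items a n"
  shows "Inv a n lo hi b c S f \<Longrightarrow> fuel \<ge> 2 * (Suc hi - lo) + (if c = 0 then 0 else 1) + 1
    \<Longrightarrow> lo \<le> p \<Longrightarrow> p \<le> hi \<Longrightarrow> sole n (mm_loop fuel 2 a lo hi b c S f) p
    \<Longrightarrow> \<exists>h. p \<le> h \<and> h \<le> n \<and> (\<forall>j. p < j \<and> j \<le> h \<longrightarrow> 1 < a p + a j)
        \<and> (\<forall>j. h < j \<and> j \<le> n \<longrightarrow> (\<exists>i. 1 \<le> i \<and> i < p \<and>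
              mm_loop fuel 2 a lo hi b c S f j = mm_loop fuel 2 a lo hi b c S f i))"
proof (induction fuel arbitrary: lo hi b c S f)
  case 0
  then show ?case by simp
next
  case (Suc fuel)
  note inv = Suc.prems(1)[unfolded Inv_def]
  have nlt: "\<not> hi < lo" using Suc.prems by simp
  have alo: "a lo \<le> 1" using va inv Suc.prems unfolding valid_items_def by auto
  show ?case
  proof (cases "c = 2")
    case True
    have e: "mm_loop (Suc fuel) 2 a lo hi b c S f = mm_loop fuel 2 a lo hi (Suc b) 0 0 f"
      using nlt True by simp
    have "Inv a n lo hi (Suc b) 0 0 f" using inv unfolding Inv_def by auto
    moreover have "fuel \<ge> 2 * (Suc hi - lo) + (if (0::nat) = 0 then 0 else 1) + 1"
      using Suc.prems(2) True by simp
    ultimately show ?thesis using Suc.IH[of lo hi "Suc b" 0 0 f] Suc.prems e by simp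
  next
    case c2: False
    show ?thesis
    proof (cases "S + a lo \<le> 1")
      case True
      define f' where "f' = f(lo := b)"
      have e: "mm_loop (Suc fuel) 2 a lo hi b c S f = mm_loop fuel 2 a (Suc lo) hi b (Suc c) (S + a lo) f'"
        using nlt True c2 by (simp add: f'_def)
      show ?thesis
      proof (cases "p = lo")
        case pl: True
        show ?thesis
        proof (cases "c = 0")
          case c0: False
          hence c1: "c = 1" using inv c2 by auto
          have "mm_loop fuel 2 a (Suc lo) hi b (Suc c) (S + a lo) f' p = b"
            by (subst frame) (auto simp: pl f'_def)
          moreover have "mm_loop fuel 2 a (Suc lo) hi b (Suc c) (S + a lo) f' (lo - 1) = b"
            using inv c1 by (subst frame) (auto simp: f'_def)
          moreover have "lo - 1 \<noteq> p" "1 \<le> lo - 1" "lo - 1 \<le> n" using inv c1 Suc.prems pl by auto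
          ultimately show ?thesis using Suc.prems(5) e unfolding sole_def by auto
        next
          case c0: True
          hence S0: "S = 0" using inv by auto
          show ?thesis
          proof (cases "hi = p")
            case True
            show ?thesis
            proof (rule exI[of _ p], intro conjI allI impI)
              show "p \<le> n" using inv True by simp
            next
              fix j assume j: "p < j \<and> j \<le> p" then show "1 < a p + a j" by simp
            next
              fix j assume j: "p < j \<and> j \<le> n"
              then obtain i where i: "1 \<le> i" "i < lo" "f j = f i" using inv True by auto
              have "mm_loop fuel 2 a (Suc lo) hi b (Suc c) (S + a lo) f' j = f j"
                using j True pl by (subst frame) (auto simp: f'_def)
              moreover have "mm_loop fuel 2 a (Suc lo) hi b (Suc c) (S + a lo) f' i = f i"
                using i by (subst frame) (auto simp: f'_def)
              ultimately show "\<exists>i. 1 \<le> i \<and> i < p \<and> mm_loop (Suc fuel) 2 a lo hi b c S f j = mm_loop (Suc fuel) 2 a lo hi b c S f i"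
                using i e pl by auto
            qed simp
          next
            case False
            hence hp: "p < hi" using Suc.prems by simp
            obtain fuel2 where fu: "fuel = Suc fuel2" using Suc.prems(2) hp nlt
              by (cases fuel) auto
            have hn: "hi \<le> n" using inv by simp
            have ap: "a p \<le> 1" using alo pl by simp
            show ?thesis
            proof (cases "a p + a (Suc p) \<le> 1")
              case True
              define f2 where "f2 = f'(Suc p := b)"
              have e2: "mm_loop fuel 2 a (Suc lo) hi b (Suc c) (S + a lo) f' =
                  mm_loop fuel2 2 a (Suc (Suc p)) hi b 2 (a p + a (Suc p)) f2"
                using fu hp pl c0 S0 True by (simp add: f2_def numeral_2_eq_2)
              have "mm_loop fuel2 2 a (Suc (Suc p)) hi b 2 (a p + a (Suc p)) f2 p = b"
                by (subst frame) (auto simp: f2_def f'_def pl)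
              moreover have "mm_loop fuel2 2 a (Suc (Suc p)) hi b 2 (a p + a (Suc p)) f2 (Suc p) = b"
                by (subst frame) (auto simp: f2_def)
              moreover have "Suc p \<noteq> p" "1 \<le> Suc p" "Suc p \<le> n" using hp hn by auto
              ultimately show ?thesis using Suc.prems(5) e e2 unfolding sole_def by auto
            next
              case na1: False
              show ?thesis
              proof (cases "a p + a hi \<le> 1")
                case True
                define f2 where "f2 = f'(hi := b)"
                have e2: "mm_loop fuel 2 a (Suc lo) hi b (Suc c) (S + a lo) f' =
                    mm_loop fuel2 2 a (Suc p) (hi - 1) b 2 (a p + a hi) f2"
                  using fu hp pl c0 S0 True na1 by (simp add: f2_def numeral_2_eq_2)
                have "mm_loop fuel2 2 a (Suc p) (hi - 1) b 2 (a p + a hi) f2 p = b"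
                  using hp by (subst frame) (auto simp: f2_def f'_def pl)
                moreover have "mm_loop fuel2 2 a (Suc p) (hi - 1) b 2 (a p + a hi) f2 hi = b"
                  using hp by (subst frame) (auto simp: f2_def)
                moreover have "hi \<noteq> p" "1 \<le> hi" "hi \<le> n" using hp hn by auto
                ultimately show ?thesis using Suc.prems(5) e e2 unfolding sole_def by auto
              next
                case na2: False
                have e2: "mm_loop fuel 2 a (Suc lo) hi b (Suc c) (S + a lo) f' =
                    mm_loop fuel2 2 a (Suc p) hi (Suc b) 0 0 f'"
                  using fu hp pl c0 S0 na2 na1 by simp
                show ?thesis
                proof (rule exI[of _ hi], intro conjI allI impI)
                  show "p \<le> hi" "hi \<le> n" using hp hn by auto
                next
                  fix j assume j: "p < j \<and> j \<le> hi"
                  have "a hi \<le> a j" using so j hn unfolding sorted_items_def by auto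
                  then show "1 < a p + a j" using na2 by simp
                next
                  fix j assume j: "hi < j \<and> j \<le> n"
                  then obtain i where i: "1 \<le> i" "i < lo" "f j = f i" using inv by auto
                  have "mm_loop fuel2 2 a (Suc p) hi (Suc b) 0 0 f' j = f j"
                    using j hp pl by (subst frame) (auto simp: f'_def)
                  moreover have "mm_loop fuel2 2 a (Suc p) hi (Suc b) 0 0 f' i = f i"
                    using i pl by (subst frame) (auto simp: f'_def)
                  ultimately show "\<exists>i. 1 \<le> i \<and> i < p \<and> mm_loop (Suc fuel) 2 a lo hi b c S f j = mm_loop (Suc fuel) 2 a lo hi b c S f i"
                    using i e e2 pl by auto
                qed
              qed
            qed
          qed
        qed
      next
        case pl: False
        have "Inv a n (Suc lo) hi b (Suc c) (S + a lo) f'"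
          unfolding Inv_def
        proof (intro conjI impI allI)
          fix j assume j: "hi < j \<and> j \<le> n"
          then obtain i where i: "1 \<le> i" "i < lo" "f j = f i" using inv by auto
          then show "\<exists>i. 1 \<le> i \<and> i < Suc lo \<and> f' j = f' i" using j nlt
            by (intro exI[of _ i]) (auto simp: f'_def)
        qed (use inv nlt c2 in \<open>auto simp: f'_def\<close>)
        moreover have "fuel \<ge> 2 * (Suc hi - Suc lo) + (if Suc c = 0 then 0 else 1) + 1"
          using Suc.prems(2) nlt by (auto split: if_splits)
        ultimately show ?thesis using Suc.IH[of "Suc lo" hi b "Suc c" "S + a lo" f'] Suc.prems e pl
          by simp
      qed
    next
      case nh: False
      have c1: "c = 1" using inv c2 nh alo by (cases "c = 0") auto
      show ?thesis
      proof (cases "S + a hi \<le> 1")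
        case True
        define f' where "f' = f(hi := b)"
        have e: "mm_loop (Suc fuel) 2 a lo hi b c S f = mm_loop fuel 2 a lo (hi - 1) b (Suc c) (S + a hi) f'"
          using nlt True c2 nh by (simp add: f'_def)
        show ?thesis
        proof (cases "p = hi")
          case ph: True
          have "mm_loop fuel 2 a lo (hi - 1) b (Suc c) (S + a hi) f' p = b"
            using nlt inv by (subst frame) (auto simp: ph f'_def)
          moreover have "mm_loop fuel 2 a lo (hi - 1) b (Suc c) (S + a hi) f' (lo - 1) = b"
            using inv c1 nlt by (subst frame) (auto simp: f'_def)
          moreover have "lo - 1 \<noteq> p" "1 \<le> lo - 1" "lo - 1 \<le> n" using inv c1 Suc.prems by auto
          ultimately show ?thesis using Suc.prems(5) e unfolding sole_def by auto
        next
          case ph: False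
          have "Inv a n lo (hi - 1) b (Suc c) (S + a hi) f'"
            unfolding Inv_def
          proof (intro conjI impI allI)
            fix j assume j: "hi - 1 < j \<and> j \<le> n"
            show "\<exists>i. 1 \<le> i \<and> i < lo \<and> f' j = f' i"
            proof (cases "j = hi")
              case True
              then show ?thesis using inv c1 nlt
                by (intro exI[of _ "lo - 1"]) (auto simp: f'_def)
            next
              case False
              have "1 \<le> hi" using nlt inv by simp
              hence "hi < j" using j False by linarith
              then obtain i where i: "1 \<le> i" "i < lo" "f j = f i" using inv j by blast
              then show ?thesis using False nlt
                by (intro exI[of _ i]) (auto simp: f'_def)
            qed
          qed (use inv nlt c1 ph Suc.prems in \<open>auto simp: f'_def\<close>)
          moreover have "fuel \<ge> 2 * (Suc (hi - 1) - lo) + (if Suc c = 0 then 0 else 1) + 1"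
            using Suc.prems(2) nlt c1 ph Suc.prems(3,4) by (auto split: if_splits)
          ultimately show ?thesis using Suc.IH[of lo "hi - 1" b "Suc c" "S + a hi" f'] Suc.prems e ph
            by simp
        qed
      next
        case False
        have e: "mm_loop (Suc fuel) 2 a lo hi b c S f = mm_loop fuel 2 a lo hi (Suc b) 0 0 f"
          using nlt False c2 nh by simp
        have "Inv a n lo hi (Suc b) 0 0 f" using inv unfolding Inv_def by auto
        moreover have "fuel \<ge> 2 * (Suc hi - lo) + (if (0::nat) = 0 then 0 else 1) + 1"
          using Suc.prems(2) c1 by simp
        ultimately show ?thesis using Suc.IH[of lo hi "Suc b" 0 0 f] Suc.prems e by simp
      qed
    qed
  qed
qed

theorem lemma1:
  fixes a :: "nat \<Rightarrow> real" and n :: nat and g :: "nat \<Rightarrow> nat"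
  assumes "valid_items a n" and "sorted_items a n"
    and "\<exists>i\<in>{1..n}. class1 a i \<and> sole n (MM 2 a n) i"
    and "p = Max {i\<in>{1..n}. class1 a i \<and> sole n (MM 2 a n) i}"
    and "is_assignment a n g"
  shows "partners n g p \<subseteq> partners n (MM 2 a n) p"
proof -
  let ?A = "{i\<in>{1..n}. class1 a i \<and> sole n (MM 2 a n) i}"
  have fin: "finite ?A" by auto
  have ne: "?A \<noteq> {}" using assms(3) by blast
  have "p \<in> ?A" unfolding assms(4) by (rule Max_in[OF fin ne])
  hence p: "1 \<le> p" "p \<le> n" "sole n (MM 2 a n) p" by auto
  have "Inv a n 1 n 0 0 0 (\<lambda>_. 0)" unfolding Inv_def by auto
  then obtain h where h: "p \<le> h" "h \<le> n" "\<forall>j. p < j \<and> j \<le> h \<longrightarrow> 1 < a p + a j"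
    "\<forall>j. h < j \<and> j \<le> n \<longrightarrow> (\<exists>i. 1 \<le> i \<and> i < p \<and> MM 2 a n j = MM 2 a n i)"
    using main[OF assms(1,2), of 1 n 0 0 0 "\<lambda>_. 0" "2 * n + 2" p] p unfolding MM_def by auto
  show ?thesis
  proof
    fix j assume "j \<in> partners n g p"
    then obtain i where j: "1 \<le> j" "j \<le> n" "p < j" and i: "1 \<le> i" "i \<le> p" "g j = g i"
      unfolding partners_def by auto
    show "j \<in> partners n (MM 2 a n) p"
    proof (cases "j \<le> h")
      case True
      have "1 < a p + a j" using h(3) True j by auto
      moreover have "a p \<le> a i" using assms(2) i p unfolding sorted_items_def by auto
      moreover have "a i + a j \<le> (\<Sum>x\<in>{x\<in>{1..n}. g x = g i}. a x)"
      proof -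
        have "a i + a j = (\<Sum>x\<in>{i, j}. a x)" using i j by simp
        also have "\<dots> \<le> (\<Sum>x\<in>{x\<in>{1..n}. g x = g i}. a x)"
          by (rule sum_mono2) (use i j p assms(1) in \<open>auto simp: valid_items_def less_imp_le\<close>)
        finally show ?thesis .
      qed
      moreover have "(\<Sum>x\<in>{x\<in>{1..n}. g x = g i}. a x) \<le> 1"
        using assms(5) unfolding is_assignment_def by blast
      ultimately show ?thesis by linarith
    next
      case False
      have "h < j" using False by simp
      then obtain i' where "1 \<le> i'" "i' < p" "MM 2 a n j = MM 2 a n i'" using h(4) j by blast
      then show ?thesis using j unfolding partners_def by (auto intro!: bexI[of _ i'])
    qed
  qed
qed

end
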